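(* For all sufficiently large positive integers $n$, the size-Ramsey number of the path $P_n$ satisfies $\hat{r}(P_n) < 137n$.
   Context: $P_n$ denotes the path on $n$ vertices. For graphs $F$ and $G$, write $G \to F$ if every colouring of the edges of $G$ with two colours yields a monochromatic copy of $F$. The size-Ramsey number of $F$ is $\hat{r}(F) = \min\{|E(G)| : G \to F\}$. *)

theory Defs
  imports Main
begin

text \<open>Vertices are natural numbers (every finite graph is isomorphic to one
  on natural-number vertices, so this loses nothing for the size-Ramsey number).\<close>
definition simple_graph :: "'a set set \<Rightarrow> bool" where
  "simple_graph E \<longleftrightarrow> finite E \<and> (\<forall>e\<in>E. card e = 2)"

definition mono_path :: "'a set set \<Rightarrow> ('a set \<Rightarrow> bool) \<Rightarrow> nat \<Rightarrow> bool" where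
  "mono_path E c n \<longleftrightarrow> (\<exists>vs col. length vs = n \<and> distinct vs \<and>
     (\<forall>i. i + 1 < n \<longrightarrow> {vs ! i, vs ! (i+1)} \<in> E \<and> c {vs ! i, vs ! (i+1)} = col))"

definition arrows_path :: "'a set set \<Rightarrow> nat \<Rightarrow> bool" where
  "arrows_path E n \<longleftrightarrow> (\<forall>c :: 'a set \<Rightarrow> bool. mono_path E c n)"

definition size_ramsey_path :: "nat \<Rightarrow> nat" where
  "size_ramsey_path n = (LEAST m. \<exists>E :: nat set set. simple_graph E \<and> card E = m \<and> arrows_path E n)"

end

theory Submission
  imports Defs "HOL-Library.FuncSet"
begin

definition pathin :: "'a set set \<Rightarrow> 'a list \<Rightarrow> bool" where
  "pathin H vs \<longleftrightarrow> distinct vs \<and> (\<forall>i. Suc i < length vs \<longrightarrow> {vs!i, vs!Suc i} \<in> H)"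

definition valid :: "'a set \<Rightarrow> 'a set set \<Rightarrow> nat \<Rightarrow> 'a set \<Rightarrow> 'a list \<Rightarrow> 'a set \<Rightarrow> bool" where
  "valid V H n S U T \<longleftrightarrow> S \<union> set U \<union> T = V \<and> S \<inter> set U = {} \<and> S \<inter> T = {} \<and> set U \<inter> T = {}
     \<and> pathin H U \<and> length U < n \<and> (\<forall>x\<in>S. \<forall>y\<in>T. {x,y} \<notin> H)"

lemma step:
  assumes V: "finite V" and np: "\<not>(\<exists>vs. length vs = n \<and> pathin H vs)"
    and v: "valid V H n S U T" and ne: "S \<noteq> {} \<or> U \<noteq> []"
  shows "\<exists>S' U' T'. valid V H n S' U' T' \<and> (T' = T \<or> (\<exists>w. T' = insert w T))
          \<and> 2*card S' + length U' < 2*card S + length U"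
proof -
  have fS: "finite S" using v V unfolding valid_def by (metis finite_Un)
  show ?thesis
  proof (cases "U = [] \<or> (\<exists>w\<in>S. {last U, w} \<in> H)")
    case True
    then obtain w where w: "w \<in> S" and adj: "U \<noteq> [] \<longrightarrow> {last U, w} \<in> H" using ne by auto
    define U' where "U' = U @ [w]"
    have wU: "w \<notin> set U" using v w unfolding valid_def by auto
    have pU': "pathin H U'"
      unfolding pathin_def
    proof (intro conjI allI impI)
      show "distinct U'" using v wU unfolding U'_def valid_def pathin_def by auto
    next
      fix i assume i: "Suc i < length U'"
      show "{U' ! i, U' ! Suc i} \<in> H"
      proof (cases "Suc i < length U")
        case True
        then show ?thesis using v unfolding valid_def pathin_def U'_def by (auto simp: nth_append)
      next
        case False
        then have si: "Suc i = length U" using i by (simp add: U'_def)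
        then have Un: "U \<noteq> []" by auto
        have li: "i = length U - 1" using si by simp
        have "U ! i = last U" using Un li by (simp add: last_conv_nth)
        moreover have "U' ! i = U ! i" using si by (simp add: U'_def nth_append)
        moreover have "U' ! Suc i = w" using si by (simp add: U'_def nth_append)
        ultimately show ?thesis using adj Un by simp
      qed
    qed
    have "length U' \<noteq> n" using np pU' by blast
    hence lU': "length U' < n" using v unfolding valid_def U'_def by auto
    have "valid V H n (S - {w}) U' T"
      using v w wU pU' lU' unfolding valid_def U'_def by auto
    moreover have "card (S - {w}) = card S - 1" using w fS by simp
    moreover have "card S \<ge> 1" using w fS by (metis One_nat_def Suc_leI card_gt_0_iff empty_iff)
    ultimately show ?thesis unfolding U'_def by (intro exI[of _ "S - {w}"] exI[of _ U'] exI[of _ T]) (auto simp: U'_def)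
  next
    case False
    hence U: "U \<noteq> []" and nadj: "\<forall>w\<in>S. {last U, w} \<notin> H" by auto
    have dU: "distinct U" using v unfolding valid_def pathin_def by auto
    have eqU: "butlast U @ [last U] = U" using U by (rule append_butlast_last_id)
    have sU: "set U = insert (last U) (set (butlast U))" using arg_cong[OF eqU, of set] by auto
    have lnb: "last U \<notin> set (butlast U)" using dU arg_cong[OF eqU, of distinct] by auto
    have pb: "pathin H (butlast U)"
      using v unfolding valid_def pathin_def by (auto simp: nth_butlast distinct_butlast)
    have "valid V H n S (butlast U) (insert (last U) T)"
      using v sU lnb pb nadj unfolding valid_def
      apply (intro conjI)
      apply (auto simp: insert_commute)
      done
    then show ?thesis using U
      by (intro exI[of _ S] exI[of _ "butlast U"] exI[of _ "insert (last U) T"]) auto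
  qed
qed

lemma dfs:
  assumes V: "finite V" and np: "\<not>(\<exists>vs. length vs = n \<and> pathin H vs)"
    and RQ: "\<And>X w. X \<subseteq> V \<Longrightarrow> w \<in> V \<Longrightarrow> \<not> Q X \<Longrightarrow> R X \<Longrightarrow> R (insert w X)"
    and RV: "R V \<Longrightarrow> Q V"
  shows "valid V H n S U T \<Longrightarrow> R T \<Longrightarrow> \<exists>S' U' T'. valid V H n S' U' T' \<and> R T' \<and> Q T'"
proof (induction "2*card S + length U" arbitrary: S U T rule: less_induct)
  case less
  show ?case
  proof (cases "Q T")
    case True with less show ?thesis by blast
  next
    case False
    have ne: "S \<noteq> {} \<or> U \<noteq> []"
    proof (rule ccontr)
      assume "\<not> (S \<noteq> {} \<or> U \<noteq> [])"
      then have "T = V" using less.prems(1) by (auto simp: valid_def)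
      then show False using RV False less.prems(2) by simp
    qed
    obtain S' U' T' where st: "valid V H n S' U' T'" and TT: "T' = T \<or> (\<exists>w. T' = insert w T)"
      and lt: "2*card S' + length U' < 2*card S + length U"
      using step[OF V np less.prems(1) ne] by blast
    have "R T'"
    proof (cases "T' = T")
      case True then show ?thesis using less.prems(2) by simp
    next
      case False
      then obtain w where w: "T' = insert w T" using TT by blast
      have "T \<subseteq> V" "w \<in> V" using less.prems(1) st w unfolding valid_def by auto
      then show ?thesis using RQ False less.prems(2) w \<open>\<not> Q T\<close> by blast
    qed
    then show ?thesis using less.hyps[OF lt st] by blast
  qed
qed

lemma valid_card:
  assumes V: "finite V" and v: "valid V H n S U T" and A: "A \<subseteq> V"
  shows "card A = card (S \<inter> A) + card (set U \<inter> A) + card (T \<inter> A)"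
proof -
  have fin: "finite S" "finite T" using v V unfolding valid_def by (metis finite_Un)+
  have "A = (S \<inter> A) \<union> (set U \<inter> A) \<union> (T \<inter> A)" using v A unfolding valid_def by auto
  then have "card A = card ((S \<inter> A) \<union> (set U \<inter> A) \<union> (T \<inter> A))" by simp
  also have "\<dots> = card ((S \<inter> A) \<union> (set U \<inter> A)) + card (T \<inter> A)"
    by (rule card_Un_disjoint) (use fin v in \<open>auto simp: valid_def\<close>)
  also have "card ((S \<inter> A) \<union> (set U \<inter> A)) = card (S \<inter> A) + card (set U \<inter> A)"
    by (rule card_Un_disjoint) (use fin v in \<open>auto simp: valid_def\<close>)
  finally show ?thesis .
qed

lemma bip:
  assumes p: "pathin H U" and HAB: "\<And>e. e \<in> H \<Longrightarrow> \<exists>x\<in>A. \<exists>y\<in>B. e = {x,y}" and AB: "A \<inter> B = {}"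
  shows "2 * card (set U \<inter> A) \<le> length U + 1"
proof -
  define I where "I = {i. i < length U \<and> U!i \<in> A}"
  have dU: "distinct U" using p by (simp add: pathin_def)
  have "set U \<inter> A = (\<lambda>i. U!i) ` I" by (auto simp: I_def in_set_conv_nth)
  moreover have "inj_on (\<lambda>i. U!i) I" using dU by (auto simp: I_def inj_on_def nth_eq_iff_index_eq)
  ultimately have c1: "card (set U \<inter> A) = card I" by (simp add: card_image)
  have sub: "Suc ` I \<subseteq> {0..length U} - I"
  proof
    fix j assume "j \<in> Suc ` I"
    then obtain i where i: "i \<in> I" "j = Suc i" by auto
    have "Suc i \<notin> I"
    proof
      assume si: "Suc i \<in> I"
      then have a1: "Suc i < length U" "U ! Suc i \<in> A" by (auto simp: I_def)
      then have "{U!i, U!Suc i} \<in> H" using p by (auto simp: pathin_def)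
      then obtain x y where "x\<in>A" "y\<in>B" "{U!i, U!Suc i} = {x,y}" using HAB by blast
      then show False using AB i a1 by (auto simp: I_def doubleton_eq_iff)
    qed
    moreover have "Suc i \<le> length U" using i(1) by (simp add: I_def)
    ultimately show "j \<in> {0..length U} - I" using i(2) by simp
  qed
  have "card (Suc ` I) \<le> card ({0..length U} - I)" by (intro card_mono[OF _ sub] finite_Diff finite_atLeastAtMost)
  moreover have "card (Suc ` I) = card I" by (simp add: card_image)
  moreover have "I \<subseteq> {0..length U}" by (auto simp: I_def)
  then have "card ({0..length U} - I) = Suc (length U) - card I"
    by (simp add: card_Diff_subset finite_subset)
  ultimately show ?thesis using c1 by simp
qed



lemma binom_step: "(c choose Suc m) * Suc m = (c choose m) * (c - m)"
  using binomial_absorption[of m c] binomial_absorb_comp[of c m] by (simp add: mult.commute)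

lemma binom_ratio: "a \<le> b \<Longrightarrow> (a choose m) * b^m \<le> (b choose m) * a^m"
proof (induction m)
  case 0 show ?case by simp
next
  case (Suc m)
  have ab: "(a - m) * b \<le> (b - m) * a"
  proof (cases "m \<le> a")
    case True
    have "(a - m) * b = a*b - m*b" by (simp add: diff_mult_distrib)
    also have "\<dots> \<le> a*b - m*a" using Suc.prems by (intro diff_le_mono2) simp
    also have "\<dots> = (b - m) * a" by (metis diff_mult_distrib mult.commute)
    finally show ?thesis .
  qed simp
  have "(a choose Suc m) * b^Suc m * Suc m = ((a choose Suc m) * Suc m) * (b^m * b)"
    by (simp only: power_Suc ac_simps)
  also have "\<dots> = ((a choose m) * (a - m)) * (b^m * b)" by (simp only: binom_step)
  also have "\<dots> = ((a choose m) * b^m) * ((a - m) * b)" by (simp only: ac_simps)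
  also have "\<dots> \<le> ((b choose m) * a^m) * ((a - m) * b)"
    using Suc.IH Suc.prems by (intro mult_right_mono) auto
  also have "\<dots> \<le> ((b choose m) * a^m) * ((b - m) * a)"
    using ab by (intro mult_left_mono) auto
  also have "\<dots> = ((b choose m) * (b - m)) * (a^m * a)" by (simp only: ac_simps)
  also have "\<dots> = ((b choose Suc m) * Suc m) * (a^m * a)" by (simp only: binom_step)
  also have "\<dots> = (b choose Suc m) * a^Suc m * Suc m" by (simp only: power_Suc ac_simps)
  finally show ?case by (metis mult_le_cancel2 zero_less_Suc)
qed

lemma numeric:
  fixes n :: nat assumes n: "n \<ge> 8"
  defines "M \<equiv> 3*n*(6*n-1)"
  shows "3^(6*n) * ((M - n*n) choose (136*n)) < M choose (136*n)"
proof -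
  define m where "m = 136*n"
  define K where "K = n*n"
  define C1 where "C1 = (M - K) choose m"
  define C0 where "C0 = M choose m"
  have MK: "M \<le> 18*K" unfolding M_def K_def by (simp add: algebra_simps diff_mult_distrib2)
  have KM: "K \<le> M"
  proof -
    have "n \<le> 3*(6*n - 1)" using n by simp
    hence "n * n \<le> n * (3*(6*n-1))" by (rule mult_le_mono2)
    thus ?thesis unfolding K_def M_def by (simp add: mult.assoc)
  qed
  have mM: "m \<le> M"
  proof -
    have "136 \<le> 3*(6*n - 1)" using n by simp
    hence "n * 136 \<le> n * (3*(6*n-1))" by (rule mult_le_mono2)
    thus ?thesis unfolding m_def M_def by (simp add: algebra_simps)
  qed
  have C0pos: "C0 > 0" unfolding C0_def using mM by simp
  have Mpos: "M > 0" using mM n unfolding m_def by simp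
  have r: "C1 * M^m \<le> C0 * (M - K)^m" unfolding C1_def C0_def by (rule binom_ratio) simp
  have r2: "(18*(M-K))^m \<le> (17*M)^m" using MK KM by (intro power_mono) auto
  have r3: "3^(6*n) * 17^m < (18::nat)^m"
  proof -
    have "(3^6 * 17^136)^n < ((18::nat)^136)^n" using n by (intro power_strict_mono) simp_all
    thus ?thesis by (simp only: m_def power_mult power_mult_distrib)
  qed
  have "3^(6*n) * C1 * (M^m * 18^m) = 3^(6*n) * (C1 * M^m) * 18^m" by (simp add: algebra_simps)
  also have "\<dots> \<le> 3^(6*n) * (C0 * (M-K)^m) * 18^m" using r by simp
  also have "\<dots> = 3^(6*n) * C0 * (18*(M-K))^m" by (simp add: power_mult_distrib mult_ac)
  also have "\<dots> \<le> 3^(6*n) * C0 * (17*M)^m" using r2 by simp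
  also have "\<dots> = (C0 * M^m) * (3^(6*n) * 17^m)" by (simp add: power_mult_distrib mult_ac)
  also have "\<dots> < (C0 * M^m) * 18^m" using r3 C0pos Mpos by simp
  also have "\<dots> = C0 * (M^m * 18^m)" by simp
  finally have "3^(6*n) * C1 * (M^m * 18^m) < C0 * (M^m * 18^m)" .
  then have "3^(6*n) * C1 < C0" by (simp only: mult_less_cancel2)
  thus ?thesis unfolding C1_def C0_def m_def K_def by simp
qed


lemma good_graph:
  fixes n :: nat assumes n: "n \<ge> 8"
  shows "\<exists>E. E \<subseteq> {e. e \<subseteq> {0..<6*n} \<and> card e = 2} \<and> card E = 136*n \<and>
     (\<forall>X Y. X \<subseteq> {0..<6*n} \<longrightarrow> Y \<subseteq> {0..<6*n} \<longrightarrow> X \<inter> Y = {} \<longrightarrow> n \<le> card X \<longrightarrow> n \<le> card Y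
        \<longrightarrow> (\<exists>x\<in>X. \<exists>y\<in>Y. {x,y} \<in> E))"
proof -
  define V where "V = {0..<6*n}"
  define P where "P = {e. e \<subseteq> V \<and> card e = 2}"
  define m where "m = 136*n"
  define M where "M = card P"
  have fV: "finite V" and cV: "card V = 6*n" by (auto simp: V_def)
  have fP: "finite P" unfolding P_def by (rule finite_subset[of _ "Pow V"]) (use fV in auto)
  have "M = (6*n) choose 2" unfolding M_def P_def using n_subsets[OF fV, of 2] cV by simp
  also have "\<dots> = 3*n*(6*n-1)"
  proof -
    have "6*n*(6*n-1) = 2*(3*n*(6*n-1))" by simp
    then show ?thesis by (simp add: choose_two)
  qed
  finally have M2: "M = 3*n*(6*n-1)" .
  define cr where "cr X Y = (\<lambda>(x,y). {x,y}) ` (X \<times> Y)" for X Y :: "nat set"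
  define D where "D = {(X,Y). X \<subseteq> V \<and> Y \<subseteq> V \<and> X \<inter> Y = {} \<and> n \<le> card X \<and> n \<le> card Y}"
  define B where "B p = {E. E \<subseteq> P - cr (fst p) (snd p) \<and> card E = m}" for p
  define All where "All = {E. E \<subseteq> P \<and> card E = m}"
  define Bad where "Bad = (\<Union>p\<in>D. B p)"
  have cAll: "card All = M choose m" unfolding All_def M_def using n_subsets[OF fP] by simp
  have crP: "cr X Y \<subseteq> P" if "(X,Y) \<in> D" for X Y
    using that unfolding cr_def D_def P_def by (auto simp: card_insert_if)
  have ccr: "card (cr X Y) = card X * card Y" if "(X,Y) \<in> D" for X Y
  proof -
    have fXY: "finite X" "finite Y" using that fV unfolding D_def by (auto intro: finite_subset)
    have "inj_on (\<lambda>(x,y). {x,y}) (X \<times> Y)"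
      using that unfolding D_def by (auto simp: inj_on_def doubleton_eq_iff)
    then show ?thesis unfolding cr_def using fXY by (simp add: card_image card_cartesian_product)
  qed
  have each: "card (B p) \<le> (M - n*n) choose m" if "p \<in> D" for p
  proof -
    obtain X Y where p: "p = (X,Y)" by (cases p)
    have "card (B p) = card (P - cr X Y) choose m"
      unfolding B_def p using n_subsets[of "P - cr X Y" m] fP by simp
    also have "card (P - cr X Y) = M - card X * card Y"
      using crP[of X Y] ccr[of X Y] that p fP unfolding M_def by (simp add: card_Diff_subset finite_subset)
    also have "M - card X * card Y \<le> M - n*n"
      using that p unfolding D_def by (intro diff_le_mono2 mult_le_mono) auto
    then have "(M - card X * card Y) choose m \<le> (M - n*n) choose m" by (rule binomial_right_mono)
    finally show ?thesis .
  qed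
  have cD: "card D \<le> 3^(6*n)"
  proof -
    define f where "f p = (\<lambda>v\<in>V. if v \<in> fst p then 0 else if v \<in> snd p then 1 else (2::nat))" for p
    have "f ` D \<subseteq> PiE V (\<lambda>_. {0,1,2})" unfolding f_def by (rule image_subsetI) (simp add: restrict_PiE_iff)
    moreover have "inj_on f D"
    proof (rule inj_onI)
      fix p q assume pD: "p \<in> D" and qD: "q \<in> D" and e: "f p = f q"
      have r: "fst r = {v\<in>V. f r v = 0} \<and> snd r = {v\<in>V. f r v = 1}" if "r \<in> D" for r
        using that unfolding D_def f_def by auto
      show "p = q" using r[OF pD] r[OF qD] e by (simp add: prod_eq_iff)
    qed
    ultimately have "card D \<le> card (PiE V (\<lambda>_. {0,1::nat,2}))"
      by (intro card_inj_on_le) (auto intro: finite_PiE fV)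
    also have "\<dots> = 3^(6*n)" using fV cV by (simp add: card_PiE numeral_3_eq_3)
    finally show ?thesis .
  qed
  have fD: "finite D"
    by (rule finite_subset[of _ "Pow V \<times> Pow V"]) (use fV in \<open>auto simp: D_def\<close>)
  have "card Bad \<le> (\<Sum>p\<in>D. card (B p))" unfolding Bad_def by (rule card_UN_le[OF fD])
  also have "\<dots> \<le> (\<Sum>p\<in>D. (M - n*n) choose m)" by (rule sum_mono) (rule each)
  also have "\<dots> = card D * ((M - n*n) choose m)" by simp
  also have "\<dots> \<le> 3^(6*n) * ((M - n*n) choose m)" using cD by simp
  also have "\<dots> < M choose m" unfolding M2 m_def by (rule numeric[OF n])
  finally have lt: "card Bad < card All" using cAll by simp
  have "\<not> All \<subseteq> Bad"
  proof
    assume "All \<subseteq> Bad"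
    moreover have "finite Bad" unfolding Bad_def B_def
      by (rule finite_subset[of _ "Pow P"]) (use fP in auto)
    ultimately have "card All \<le> card Bad" by (rule card_mono[rotated])
    then show False using lt by simp
  qed
  then obtain E where EA: "E \<in> All" and EB: "E \<notin> Bad" by blast
  show ?thesis
  proof (intro exI[of _ E] conjI allI impI)
    show "E \<subseteq> {e. e \<subseteq> {0..<6*n} \<and> card e = 2}" using EA unfolding All_def P_def V_def by auto
    show "card E = 136*n" using EA unfolding All_def m_def by auto
    fix X Y assume X: "X \<subseteq> {0..<6*n}" and Y: "Y \<subseteq> {0..<6*n}" and XY: "X \<inter> Y = {}"
      and cX: "n \<le> card X" and cY: "n \<le> card Y"
    show "\<exists>x\<in>X. \<exists>y\<in>Y. {x,y} \<in> E"
    proof (rule ccontr)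
      assume ne: "\<not> (\<exists>x\<in>X. \<exists>y\<in>Y. {x,y} \<in> E)"
      have D: "(X,Y) \<in> D" using X Y XY cX cY unfolding D_def V_def by auto
      have "E \<in> B (X,Y)" using EA ne unfolding B_def All_def cr_def by auto
      then show False using EB D unfolding Bad_def by auto
    qed
  qed
qed


lemma arrows:
  fixes n :: nat and E :: "nat set set"
  assumes n: "n \<ge> 8"
    and good: "\<forall>X Y. X \<subseteq> {0..<6*n} \<longrightarrow> Y \<subseteq> {0..<6*n} \<longrightarrow> X \<inter> Y = {} \<longrightarrow> n \<le> card X \<longrightarrow> n \<le> card Y
        \<longrightarrow> (\<exists>x\<in>X. \<exists>y\<in>Y. {x,y} \<in> E)"
  shows "arrows_path E n"
  unfolding arrows_path_def
proof
  fix c :: "nat set \<Rightarrow> bool"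
  show "mono_path E c n"
  proof (rule ccontr)
    assume nm: "\<not> mono_path E c n"
    define Hr where "Hr = {e\<in>E. c e}"
    define Hb where "Hb = {e\<in>E. \<not> c e}"
    have npr: "\<not>(\<exists>vs. length vs = n \<and> pathin Hr vs)"
    proof
      assume "\<exists>vs. length vs = n \<and> pathin Hr vs"
      then obtain vs where "length vs = n" "pathin Hr vs" by blast
      then have "mono_path E c n" unfolding mono_path_def pathin_def Hr_def
        by (intro exI[of _ vs] exI[of _ True]) auto
      then show False using nm by simp
    qed
    have npb: "\<not>(\<exists>vs. length vs = n \<and> pathin H vs)" if "H \<subseteq> Hb" for H
    proof
      assume "\<exists>vs. length vs = n \<and> pathin H vs"
      then obtain vs where "length vs = n" "pathin H vs" by blast
      then have "mono_path E c n" using that unfolding mono_path_def pathin_def Hb_def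
        by (intro exI[of _ vs] exI[of _ False]) auto
      then show False using nm by simp
    qed
    define V where "V = {0..<6*n}"
    define need where "need = 2*n + n div 2"
    have fV: "finite V" and cV: "card V = 6*n" by (auto simp: V_def)
    have v0: "valid V H n V [] {}" for H using n by (simp add: valid_def pathin_def)
    obtain S1 U1 T1 where st1: "valid V Hr n S1 U1 T1" and cT1: "card T1 \<le> need" "need \<le> card T1"
    proof -
      have "\<exists>S' U' T'. valid V Hr n S' U' T' \<and> card T' \<le> need \<and> need \<le> card T'"
      proof (rule dfs[OF fV npr, where R="\<lambda>T. card T \<le> need" and Q="\<lambda>T. need \<le> card T" and S=V and U="[]" and T="{}"])
        fix X w assume "X \<subseteq> V" "w \<in> V" "\<not> need \<le> card X" "card X \<le> need"
        then show "card (insert w X) \<le> need" using fV by (simp add: card_insert_if finite_subset)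
      next
        show "card V \<le> need \<Longrightarrow> need \<le> card V" using cV unfolding need_def by simp
      qed (auto simp: v0)
      then show ?thesis using that by blast
    qed
    have cS1: "card S1 \<ge> need"
    proof -
      have "card V = card (S1 \<inter> V) + card (set U1 \<inter> V) + card (T1 \<inter> V)" by (rule valid_card[OF fV st1]) simp
      moreover have "S1 \<inter> V = S1" "set U1 \<inter> V = set U1" "T1 \<inter> V = T1" using st1 unfolding valid_def by auto
      moreover have "card (set U1) \<le> n - 1" using st1 card_length[of U1] unfolding valid_def by auto
      ultimately show ?thesis using cV cT1 unfolding need_def by simp
    qed
    have S1V: "S1 \<subseteq> V" and T1V: "T1 \<subseteq> V" and S1T1: "S1 \<inter> T1 = {}" using st1 unfolding valid_def by auto
    have nored: "\<And>x y. x \<in> S1 \<Longrightarrow> y \<in> T1 \<Longrightarrow> {x,y} \<notin> Hr" using st1 unfolding valid_def by auto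
    define V2 where "V2 = S1 \<union> T1"
    define H2 where "H2 = {e. e \<in> E \<and> \<not> c e \<and> (\<exists>x\<in>S1. \<exists>y\<in>T1. e = {x,y})}"
    have fV2: "finite V2" using fV S1V T1V unfolding V2_def by (auto intro: finite_subset)
    have npb2: "\<not>(\<exists>vs. length vs = n \<and> pathin H2 vs)" by (rule npb) (auto simp: H2_def Hb_def)
    define R where "R T = (card (T \<inter> S1) \<le> n \<and> card (T \<inter> T1) \<le> n)" for T
    define Q where "Q T = (n \<le> card (T \<inter> S1) \<or> n \<le> card (T \<inter> T1))" for T
    obtain S2 U2 T2 where st2: "valid V2 H2 n S2 U2 T2" and R2: "R T2" and Q2: "Q T2"
    proof -
      have "\<exists>S' U' T'. valid V2 H2 n S' U' T' \<and> R T' \<and> Q T'"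
      proof (rule dfs[OF fV2 npb2, where R=R and Q=Q and S=V2 and U="[]" and T="{}"])
        fix X w assume X: "X \<subseteq> V2" "w \<in> V2" "\<not> Q X" "R X"
        have fX: "finite X" using X fV2 by (auto intro: finite_subset)
        have a: "card (insert w X \<inter> A) \<le> Suc (card (X \<inter> A))" for A
          using fX by (cases "w \<in> A") (auto simp: card_insert_if)
        show "R (insert w X)" using X a[of S1] a[of T1] unfolding R_def Q_def by fastforce
      next
        show "R V2 \<Longrightarrow> Q V2" using cS1 unfolding Q_def V2_def need_def by auto
      next
        show "valid V2 H2 n V2 [] {}" using n by (simp add: valid_def pathin_def)
      qed (auto simp: R_def)
      then show ?thesis using that by blast
    qed
    have S2V2: "S2 \<subseteq> V2" and T2V2: "T2 \<subseteq> V2" and S2T2: "S2 \<inter> T2 = {}" using st2 unfolding valid_def by auto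
    have noH2: "\<And>x y. x \<in> S2 \<Longrightarrow> y \<in> T2 \<Longrightarrow> {x,y} \<notin> H2" using st2 unfolding valid_def by auto
    have lU2: "length U2 + 1 \<le> n" using st2 unfolding valid_def by auto
    have bA: "2 * card (set U2 \<inter> S1) \<le> length U2 + 1"
      by (rule bip[of H2]) (use st2 S1T1 in \<open>auto simp: valid_def H2_def\<close>)
    have bB: "2 * card (set U2 \<inter> T1) \<le> length U2 + 1"
      by (rule bip[of H2]) (use st2 S1T1 in \<open>auto simp: valid_def H2_def insert_commute\<close>)
    have dA: "card S1 = card (S2 \<inter> S1) + card (set U2 \<inter> S1) + card (T2 \<inter> S1)"
      by (rule valid_card[OF fV2 st2]) (simp add: V2_def)
    have dB: "card T1 = card (S2 \<inter> T1) + card (set U2 \<inter> T1) + card (T2 \<inter> T1)"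
      by (rule valid_card[OF fV2 st2]) (simp add: V2_def)
    have blue: "{x,y} \<in> H2" if "x \<in> S1" "y \<in> T1" "{x,y} \<in> E" for x y
      using nored[OF that(1,2)] that unfolding H2_def Hr_def by auto
    show False
    proof (cases "n \<le> card (T2 \<inter> T1)")
      case True
      have "n \<le> card (S2 \<inter> S1)" using dA bA lU2 R2 cS1 unfolding R_def need_def by linarith
      then obtain x y where xy: "x \<in> S2 \<inter> S1" "y \<in> T2 \<inter> T1" "{x,y} \<in> E"
        using good[rule_format, of "S2 \<inter> S1" "T2 \<inter> T1"] True S1V T1V S2T2 unfolding V_def by blast
      then show False using blue noH2 by blast
    next
      case False
      then have c2: "n \<le> card (T2 \<inter> S1)" using Q2 unfolding Q_def by simp
      have "n \<le> card (S2 \<inter> T1)" using dB bB lU2 R2 cT1 unfolding R_def need_def by linarith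
      then obtain x y where xy: "x \<in> T2 \<inter> S1" "y \<in> S2 \<inter> T1" "{x,y} \<in> E"
        using good[rule_format, of "T2 \<inter> S1" "S2 \<inter> T1"] c2 S1V T1V S2T2 unfolding V_def by blast
      then have "{y,x} \<in> H2" using blue by (simp add: insert_commute)
      then show False using noH2 xy by blast
    qed
  qed
qed

theorem theorem1p1:
  shows "\<exists>N. \<forall>n\<ge>N. size_ramsey_path n < 137 * n"
proof (intro exI allI impI)
  fix n :: nat assume n: "n \<ge> 8"
  obtain E where E: "E \<subseteq> {e. e \<subseteq> {0..<6*n} \<and> card e = 2}" "card E = 136*n"
    and good: "\<forall>X Y. X \<subseteq> {0..<6*n} \<longrightarrow> Y \<subseteq> {0..<6*n} \<longrightarrow> X \<inter> Y = {} \<longrightarrow> n \<le> card X \<longrightarrow> n \<le> card Y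
        \<longrightarrow> (\<exists>x\<in>X. \<exists>y\<in>Y. {x,y} \<in> E)"
    using good_graph[OF n] by blast
  have fE: "finite E"
    by (rule finite_subset[OF E(1), of ]) (rule finite_subset[of _ "Pow {0..<6*n}"], auto)
  have "simple_graph E" using E fE unfolding simple_graph_def by auto
  moreover have "arrows_path E n" by (rule arrows[OF n good])
  ultimately have "size_ramsey_path n \<le> 136*n"
    unfolding size_ramsey_path_def using E(2) by (intro Least_le) blast
  then show "size_ramsey_path n < 137 * n" using n by simp
qed
end
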